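(* Let $n\ge 1$, $0<\alpha\le 1$, let $\Omega\subset\mathbb{R}^n$ be a bounded domain, and let $f\in C(\Omega)$ be bounded with $f\le 0$. Let $u:\mathbb{R}^n\to\mathbb{R}$ be a viscosity supersolution to $\mathcal{L}_\infty u=f$ in $\Omega$. Assume there exists $x_0\in\Omega$ such that $u(y)\ge u(x_0)$ for all $y\in\mathbb{R}^n\setminus\Omega$. Then $u$ is constant on $\mathbb{R}^n$.
   Context: For $0<\alpha\le1$ and a function $\varphi:\mathbb{R}^n\to\mathbb{R}$, the nonlocal infinity Laplacian is $\mathcal{L}_\infty\varphi(x)=\mathcal{L}^+_\infty\varphi(x)+\mathcal{L}^-_\infty\varphi(x)$, where $\mathcal{L}^+_\infty\varphi(x)=\sup_{y\in\mathbb{R}^n}\frac{\varphi(y)-\varphi(x)}{|x-y|^\alpha}$ and $\mathcal{L}^-_\infty\varphi(x)=\inf_{y\in\mathbb{R}^n}\frac{\varphi(y)-\varphi(x)}{|x-y|^\alpha}$ (with $y\neq x$). Viscosity supersolution: a lower semicontinuous $u:\mathbb{R}^n\to\mathbb{R}$ with $|u(x)|\le C(1+|x|)^\beta$ for some $C>0$, $\beta<\alpha$, is a viscosity supersolution to $\mathcal{L}_\infty u=f$ in $\Omega$ if for every $x_0\in\Omega$ and every locally Lipschitz continuous $\varphi:\mathbb{R}^n\to\mathbb{R}$ with $|\varphi(x)|\le C(1+|x|)^\beta$ for some $C>0$, $\beta<\alpha$, such that $\varphi(x_0)=u(x_0)$ and $u\ge\varphi$ on $\mathbb{R}^n$, one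 has $\mathcal{L}_\infty\varphi(x_0)\le f(x_0)$. Viscosity subsolutions are defined analogously with $u$ upper semicontinuous, $u\le\varphi$ on $\mathbb{R}^n$, and $\mathcal{L}_\infty\varphi(x_0)\ge f(x_0)$; a viscosity solution is a continuous function that is both. *)

theory Defs
  imports "HOL-Analysis.Analysis"
begin

definition lsc :: "('a::topological_space \<Rightarrow> real) \<Rightarrow> bool" where
  "lsc u \<longleftrightarrow> (\<forall>x. \<forall>t. t < u x \<longrightarrow> (\<forall>\<^sub>F y in at x. t < u y))"

definition usc :: "('a::topological_space \<Rightarrow> real) \<Rightarrow> bool" where
  "usc u \<longleftrightarrow> (\<forall>x. \<forall>t. u x < t \<longrightarrow> (\<forall>\<^sub>F y in at x. u y < t))"

definition growth_ok :: "real \<Rightarrow> ('a::real_normed_vector \<Rightarrow> real) \<Rightarrow> bool" where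
  "growth_ok \<alpha> u \<longleftrightarrow> (\<exists>C \<beta>. C > 0 \<and> \<beta> < \<alpha> \<and> (\<forall>x. \<bar>u x\<bar> \<le> C * (1 + norm x) powr \<beta>))"

definition locally_lipschitz :: "('a::metric_space \<Rightarrow> real) \<Rightarrow> bool" where
  "locally_lipschitz \<phi> \<longleftrightarrow> (\<forall>x. \<exists>r>0. \<exists>L. lipschitz_on L (ball x r) \<phi>)"

definition Linf_plus :: "real \<Rightarrow> ('a::real_normed_vector \<Rightarrow> real) \<Rightarrow> 'a \<Rightarrow> real" where
  "Linf_plus \<alpha> \<phi> x = (SUP y\<in>UNIV - {x}. (\<phi> y - \<phi> x) / norm (x - y) powr \<alpha>)"

definition Linf_minus :: "real \<Rightarrow> ('a::real_normed_vector \<Rightarrow> real) \<Rightarrow> 'a \<Rightarrow> real" where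
  "Linf_minus \<alpha> \<phi> x = (INF y\<in>UNIV - {x}. (\<phi> y - \<phi> x) / norm (x - y) powr \<alpha>)"

definition Linf :: "real \<Rightarrow> ('a::real_normed_vector \<Rightarrow> real) \<Rightarrow> 'a \<Rightarrow> real" where
  "Linf \<alpha> \<phi> x = Linf_plus \<alpha> \<phi> x + Linf_minus \<alpha> \<phi> x"

definition admissible_test :: "real \<Rightarrow> ('a::real_normed_vector \<Rightarrow> real) \<Rightarrow> bool" where
  "admissible_test \<alpha> \<phi> \<longleftrightarrow> locally_lipschitz \<phi> \<and> growth_ok \<alpha> \<phi>"

definition viscosity_supersolution ::
  "real \<Rightarrow> ('a::real_normed_vector \<Rightarrow> real) \<Rightarrow> 'a set \<Rightarrow> ('a \<Rightarrow> real) \<Rightarrow> bool" where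
  "viscosity_supersolution \<alpha> f \<Omega> u \<longleftrightarrow>
     lsc u \<and> growth_ok \<alpha> u \<and>
     (\<forall>x0\<in>\<Omega>. \<forall>\<phi>. admissible_test \<alpha> \<phi> \<and> \<phi> x0 = u x0 \<and> (\<forall>x. u x \<ge> \<phi> x)
         \<longrightarrow> Linf \<alpha> \<phi> x0 \<le> f x0)"

definition viscosity_subsolution ::
  "real \<Rightarrow> ('a::real_normed_vector \<Rightarrow> real) \<Rightarrow> 'a set \<Rightarrow> ('a \<Rightarrow> real) \<Rightarrow> bool" where
  "viscosity_subsolution \<alpha> f \<Omega> u \<longleftrightarrow>
     usc u \<and> growth_ok \<alpha> u \<and>
     (\<forall>x0\<in>\<Omega>. \<forall>\<phi>. admissible_test \<alpha> \<phi> \<and> \<phi> x0 = u x0 \<and> (\<forall>x. u x \<le> \<phi> x)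
         \<longrightarrow> Linf \<alpha> \<phi> x0 \<ge> f x0)"

end

theory Submission
  imports Defs
begin

lemma lsc_open:
  assumes "lsc u" shows "open {x. t < u x}"
proof (subst open_subopen, intro ballI)
  fix x assume xin: "x \<in> {x. t < u x}"
  then have "\<forall>\<^sub>F y in at x. t < u y" using assms unfolding lsc_def by auto
  then obtain S where S: "open S" "x \<in> S" "\<forall>y\<in>S. y \<noteq> x \<longrightarrow> t < u y"
    unfolding eventually_at_topological by blast
  show "\<exists>T. open T \<and> x \<in> T \<and> T \<subseteq> {x. t < u x}"
    using S xin by (intro exI[of _ S]) auto
qed

lemma lsc_attains_min:
  fixes u :: "'a::topological_space \<Rightarrow> real"
  assumes "lsc u" "compact K" "K \<noteq> {}"
  shows "\<exists>z\<in>K. \<forall>x\<in>K. u z \<le> u x"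
proof -
  have cov1: "K \<subseteq> (\<Union>n\<in>UNIV. {x. - real n < u x})"
  proof
    fix x assume "x \<in> K"
    obtain n where "- u x < real n" using reals_Archimedean2 by blast
    then show "x \<in> (\<Union>n\<in>UNIV. {x. - real n < u x})" by (intro UN_I[of n]) auto
  qed
  obtain C where C: "finite C" "K \<subseteq> (\<Union>n\<in>C. {x. - real n < u x})"
    apply (rule compactE_image[OF assms(2), of UNIV "\<lambda>n. {x. - real n < u x}"])
    using lsc_open[OF assms(1)] cov1 by auto
  define N where "N = Max (insert 0 C)"
  have bd: "- real N < u x" if xK: "x \<in> K" for x
  proof -
    obtain n where "n \<in> C" "- real n < u x" using C xK by blast
    moreover have "n \<le> N" unfolding N_def using C(1) \<open>n \<in> C\<close> by simp
    ultimately show ?thesis by linarith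
  qed
  have bdd: "bdd_below (u ` K)" using bd by (intro bdd_belowI[of _ "- real N"]) (auto intro: less_imp_le)
  define m where "m = Inf (u ` K)"
  have mle: "m \<le> u x" if "x \<in> K" for x unfolding m_def using bdd that by (simp add: cINF_lower)
  show ?thesis
  proof (rule ccontr)
    assume neg: "\<not> ?thesis"
    have gt: "m < u x" if xK: "x \<in> K" for x
    proof (rule ccontr)
      assume "\<not> m < u x"
      then have "\<forall>y\<in>K. u x \<le> u y" using mle by (meson order_trans not_less)
      then show False using neg xK by blast
    qed
    have cov2: "K \<subseteq> (\<Union>n\<in>UNIV. {x. m + 1 / real (Suc n) < u x})"
    proof
      fix x assume "x \<in> K"
      then have "0 < u x - m" using gt by auto
      then obtain n where "1 / real (Suc n) < u x - m" using reals_Archimedean[of "u x - m"] by (auto simp: inverse_eq_divide)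
      then show "x \<in> (\<Union>n\<in>UNIV. {x. m + 1 / real (Suc n) < u x})" by (intro UN_I[of n]) auto
    qed
    obtain D where D: "finite D" "K \<subseteq> (\<Union>n\<in>D. {x. m + 1 / real (Suc n) < u x})"
      apply (rule compactE_image[OF assms(2), of UNIV "\<lambda>n. {x. m + 1 / real (Suc n) < u x}"])
      using lsc_open[OF assms(1)] cov2 by auto
    define M where "M = Max (insert 0 D)"
    have bd2: "m + 1 / real (Suc M) < u x" if xK: "x \<in> K" for x
    proof -
      obtain n where "n \<in> D" "m + 1 / real (Suc n) < u x" using D xK by blast
      moreover have "n \<le> M" unfolding M_def using D(1) \<open>n \<in> D\<close> by simp
      moreover have "1 / real (Suc M) \<le> 1 / real (Suc n)" using \<open>n \<le> M\<close> by (simp add: frac_le)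
      ultimately show ?thesis by linarith
    qed
    have "m + 1 / real (Suc M) \<le> Inf (u ` K)"
      using assms(3) bd2 by (intro cINF_greatest) (auto intro: less_imp_le)
    then have "m + 1 / real (Suc M) \<le> m" by (simp add: m_def)
    then show False by simp
  qed
qed

lemma max0_lip: "\<bar>max 0 (a::real) - max 0 b\<bar> \<le> \<bar>a - b\<bar>"
  by (simp add: max_def abs_if)

lemma bump_lip:
  fixes w :: "'a::metric_space"
  assumes "r > 0" "d \<ge> 0"
  shows "lipschitz_on (d * 2 / r) S (\<lambda>y. m + d * max 0 (1 - 2 * dist y w / r))"
proof (rule lipschitz_onI)
  show "0 \<le> d * 2 / r" using assms by simp
  fix a b assume "a \<in> S" "b \<in> S"
  have "dist (m + d * max 0 (1 - 2 * dist a w / r)) (m + d * max 0 (1 - 2 * dist b w / r))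
      = d * \<bar>max 0 (1 - 2 * dist a w / r) - max 0 (1 - 2 * dist b w / r)\<bar>"
    using assms by (simp add: dist_real_def abs_mult right_diff_distrib[symmetric])
  also have "\<dots> \<le> d * \<bar>(1 - 2 * dist a w / r) - (1 - 2 * dist b w / r)\<bar>"
    using assms max0_lip by (intro mult_left_mono) auto
  also have "\<bar>(1 - 2 * dist a w / r) - (1 - 2 * dist b w / r)\<bar> \<le> 2 / r * dist a b"
  proof -
    have e: "(1 - 2 * dist a w / r) - (1 - 2 * dist b w / r) = 2 / r * (dist b w - dist a w)"
      using assms by (simp add: field_simps)
    have pos: "\<bar>2 / r\<bar> = 2 / r" using assms by simp
    have "\<bar>(1 - 2 * dist a w / r) - (1 - 2 * dist b w / r)\<bar> = \<bar>2 / r\<bar> * \<bar>dist b w - dist a w\<bar>"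
      unfolding e abs_mult by (rule refl)
    then have "\<bar>(1 - 2 * dist a w / r) - (1 - 2 * dist b w / r)\<bar> = 2 / r * \<bar>dist b w - dist a w\<bar>"
      unfolding pos .
    moreover have "\<bar>dist b w - dist a w\<bar> \<le> dist a b"
      using abs_dist_diff_le[of b w a] by (simp add: dist_commute)
    moreover have "2 / r * \<bar>dist b w - dist a w\<bar> \<le> 2 / r * dist a b"
      using assms \<open>\<bar>dist b w - dist a w\<bar> \<le> dist a b\<close> by (intro mult_left_mono) auto
    ultimately show ?thesis by linarith
  qed
  then have "d * \<bar>(1 - 2 * dist a w / r) - (1 - 2 * dist b w / r)\<bar> \<le> d * (2 / r * dist a b)"
    using assms by (intro mult_left_mono) auto
  also have "\<dots> = d * 2 / r * dist a b" by simp
  finally show "dist (m + d * max 0 (1 - 2 * dist a w / r)) (m + d * max 0 (1 - 2 * dist b w / r))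
      \<le> d * 2 / r * dist a b" .
qed

theorem mainTheorem1:
  fixes \<Omega> :: "(real ^ 'n) set" and f u :: "real ^ 'n \<Rightarrow> real" and \<alpha> :: real
  assumes "0 < \<alpha>" and "\<alpha> \<le> 1"
    and "open \<Omega>" and "connected \<Omega>" and "bounded \<Omega>"
    and "continuous_on \<Omega> f" and "bounded (f ` \<Omega>)" and "\<forall>x\<in>\<Omega>. f x \<le> 0"
    and "viscosity_supersolution \<alpha> f \<Omega> u"
    and "x0 \<in> \<Omega>" and "\<forall>y\<in>UNIV - \<Omega>. u y \<ge> u x0"
  shows "\<exists>c. \<forall>x. u x = c"
proof -
  have lscu: "lsc u" using assms(9) unfolding viscosity_supersolution_def by blast
  have test: "\<And>x0 \<phi>. x0 \<in> \<Omega> \<Longrightarrow> admissible_test \<alpha> \<phi> \<Longrightarrow> \<phi> x0 = u x0 \<Longrightarrow> (\<forall>x. u x \<ge> \<phi> x)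
         \<Longrightarrow> Linf \<alpha> \<phi> x0 \<le> f x0"
    using assms(9) unfolding viscosity_supersolution_def by blast
  have "compact (closure \<Omega>)" using assms(5) by (simp add: compact_closure)
  moreover have "closure \<Omega> \<noteq> {}" using assms(10) closure_subset by blast
  ultimately obtain z1 where z1: "z1 \<in> closure \<Omega>" "\<forall>x\<in>closure \<Omega>. u z1 \<le> u x"
    using lsc_attains_min[OF lscu] by blast
  have x0c: "x0 \<in> closure \<Omega>" using assms(10) closure_subset by blast
  have "\<exists>z\<in>\<Omega>. \<forall>y. u z \<le> u y"
  proof (cases "z1 \<in> \<Omega>")
    case True
    have "u z1 \<le> u y" for y
    proof (cases "y \<in> closure \<Omega>")
      case True then show ?thesis using z1 by blast
    next
      case False
      then have "y \<notin> \<Omega>" using closure_subset by blast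
      then have "u x0 \<le> u y" using assms(11) by blast
      moreover have "u z1 \<le> u x0" using z1 x0c by blast
      ultimately show ?thesis by linarith
    qed
    then show ?thesis using True by blast
  next
    case False
    then have z1x: "u x0 \<le> u z1" using assms(11) by blast
    have "u x0 \<le> u y" for y
    proof (cases "y \<in> closure \<Omega>")
      case True then show ?thesis using z1 z1x by force
    next
      case False
      then have "y \<notin> \<Omega>" using closure_subset by blast
      then show ?thesis using assms(11) by blast
    qed
    then show ?thesis using assms(10) by blast
  qed
  then obtain z where zO: "z \<in> \<Omega>" and zmin: "\<And>y. u z \<le> u y" by blast
  define m where "m = u z"
  show ?thesis
  proof (rule exI[of _ m], rule allI, rule ccontr)
    fix w assume "u w \<noteq> m"
    then have wgt: "m < u w" using zmin[of w] m_def by linarith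
    define \<delta> where "\<delta> = (u w - m) / 2"
    have dpos: "\<delta> > 0" using wgt \<delta>_def by simp
    have "m + \<delta> < u w" using wgt \<delta>_def by simp
    then have "\<forall>\<^sub>F y in at w. m + \<delta> < u y" using lscu unfolding lsc_def by blast
    then obtain S where S: "open S" "w \<in> S" "\<forall>y\<in>S. y \<noteq> w \<longrightarrow> m + \<delta> < u y"
      unfolding eventually_at_topological by blast
    obtain r where r: "r > 0" "ball w r \<subseteq> S" using S open_contains_ball by blast
    have ub: "m + \<delta> < u y" if "dist y w < r" for y
    proof (cases "y = w")
      case True then show ?thesis using \<open>m + \<delta> < u w\<close> by simp
    next
      case False
      have "y \<in> S" using r that by (auto simp: dist_commute)
      then show ?thesis using S False by blast
    qed
    define \<phi> where "\<phi> = (\<lambda>y. m + \<delta> * max 0 (1 - 2 * dist y w / r))"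
    have phige: "\<phi> y \<ge> m" for y unfolding \<phi>_def using dpos by simp
    have phile: "\<phi> y \<le> m + \<delta>" for y
    proof -
      have "max 0 (1 - 2 * dist y w / r) \<le> 1" using r by simp
      then have "\<delta> * max 0 (1 - 2 * dist y w / r) \<le> \<delta>" using dpos
        by (metis mult.right_neutral mult_left_mono less_imp_le)
      then show ?thesis unfolding \<phi>_def by simp
    qed
    have phi_far: "\<phi> y = m" if "r / 2 \<le> dist y w" for y
    proof -
      have "2 * dist y w / r \<ge> 1" using r that by (simp add: field_simps)
      then show ?thesis unfolding \<phi>_def by simp
    qed
    have phi_u: "\<forall>x. u x \<ge> \<phi> x"
    proof
      fix y show "u y \<ge> \<phi> y"
      proof (cases "dist y w < r")
        case True then show ?thesis using ub[OF True] phile[of y] by linarith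
      next
        case False
        then have "\<phi> y = m" using r by (intro phi_far) simp
        then show ?thesis using zmin[of y] m_def by simp
      qed
    qed
    have zfar: "r \<le> dist z w"
    proof (rule ccontr)
      assume "\<not> r \<le> dist z w"
      then have "m + \<delta> < u z" using ub by simp
      then show False using dpos m_def by simp
    qed
    have phiz: "\<phi> z = u z" using phi_far[of z] zfar r m_def by simp
    have lip: "locally_lipschitz \<phi>"
      unfolding locally_lipschitz_def \<phi>_def
    proof (rule allI, rule exI[of _ 1], rule conjI)
      show "(0::real) < 1" by simp
      fix x show "\<exists>L. L-lipschitz_on (ball x 1) (\<lambda>y. m + \<delta> * max 0 (1 - 2 * dist y w / r))"
        using bump_lip[OF r(1) less_imp_le[OF dpos]] by blast
    qed
    have gr: "growth_ok \<alpha> \<phi>"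
      unfolding growth_ok_def
    proof (rule exI[of _ "\<bar>m\<bar> + \<delta> + 1"], rule exI[of _ 0], intro conjI allI)
      show "0 < \<bar>m\<bar> + \<delta> + 1" using dpos by simp
      show "(0::real) < \<alpha>" using assms(1) .
      fix x :: "real ^ 'n"
      have "1 + norm x \<noteq> 0" using norm_ge_zero[of x] by linarith
      then have "(1 + norm x) powr 0 = 1" by simp
      moreover have "\<bar>\<phi> x\<bar> \<le> \<bar>m\<bar> + \<delta> + 1" using phige[of x] phile[of x] by linarith
      ultimately show "\<bar>\<phi> x\<bar> \<le> (\<bar>m\<bar> + \<delta> + 1) * (1 + norm x) powr 0" by simp
    qed
    have adm: "admissible_test \<alpha> \<phi>" unfolding admissible_test_def using lip gr by blast
    have le: "Linf \<alpha> \<phi> z \<le> f z" using test[OF zO adm phiz phi_u] .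
    have wz: "w \<noteq> z" using wgt m_def by auto
    define g where "g = (\<lambda>y. (\<phi> y - \<phi> z) / norm (z - y) powr \<alpha>)"
    have minus: "Linf_minus \<alpha> \<phi> z \<ge> 0"
      unfolding Linf_minus_def
    proof (rule cINF_greatest)
      show "UNIV - {z} \<noteq> {}" using wz by blast
      fix y assume "y \<in> UNIV - {z}"
      show "0 \<le> (\<phi> y - \<phi> z) / norm (z - y) powr \<alpha>"
        using phige[of y] phiz m_def by (intro divide_nonneg_nonneg) auto
    qed
    define B where "B = \<delta> / (r / 2) powr \<alpha>"
    have bdd: "bdd_above (g ` (UNIV - {z}))"
    proof (rule bdd_aboveI2[of _ _ B])
      fix y assume "y \<in> UNIV - {z}"
      show "g y \<le> B"
      proof (cases "dist y w < r / 2")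
        case True
        have "dist z w \<le> dist z y + dist y w" by (rule dist_triangle)
        then have d: "r / 2 \<le> norm (z - y)" using zfar True by (simp add: dist_norm)
        have pp: "0 < (r / 2) powr \<alpha>" using r by simp
        have "(r / 2) powr \<alpha> \<le> norm (z - y) powr \<alpha>"
          using d r assms(1) by (intro powr_mono2) auto
        moreover have "0 \<le> \<phi> y - \<phi> z" "\<phi> y - \<phi> z \<le> \<delta>"
          using phige[of y] phile[of y] phiz m_def by auto
        ultimately have "(\<phi> y - \<phi> z) / norm (z - y) powr \<alpha> \<le> \<delta> / (r / 2) powr \<alpha>"
          using pp dpos by (intro frac_le) auto
        then show ?thesis unfolding g_def B_def .
      next
        case False
        then have "\<phi> y = m" by (intro phi_far) simp
        then have "g y = 0" unfolding g_def using phiz m_def by simp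
        then show ?thesis unfolding B_def using dpos r by simp
      qed
    qed
    have gw: "g w > 0"
    proof -
      have "\<phi> w = m + \<delta>" unfolding \<phi>_def by simp
      moreover have "norm (z - w) > 0" using wz by simp
      ultimately show ?thesis unfolding g_def using phiz m_def dpos by simp
    qed
    have plus: "Linf_plus \<alpha> \<phi> z > 0"
    proof -
      have "g w \<le> (SUP y\<in>UNIV - {z}. g y)" using bdd wz by (intro cSUP_upper) auto
      then show ?thesis unfolding Linf_plus_def g_def[symmetric] using gw by linarith
    qed
    have "Linf \<alpha> \<phi> z > 0" unfolding Linf_def using plus minus by linarith
    moreover have "f z \<le> 0" using assms(8) zO by blast
    ultimately show False using le by linarith
  qed
qed

end
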